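(* Let $f:U\to\mathbb{R}^3$ be a Guichard net with Lamé coefficients $H_1,H_2,H_3$ and let $\bar f$ be a Combescure transform of $f$ with Lamé coefficients $\bar H_1,\bar H_2,\bar H_3$ which is an $\alpha^2|\bar f|^2$-system, $\alpha\in\mathbb{R}\setminus\{0\}$. Then the 1-parameter family of Ribaucour transformations of $f$ induced by $\bar f$ contains exactly one Guichard net $\mathcal{R}(f)$, namely the one given by $$\mathcal{R}(f)=f-\frac{2\varphi}{|\bar f|^2}\bar f,\qquad \mathcal{R}(H_i)=H_i-\frac{2\varphi}{|\bar f|^2}\bar H_i,$$ where $\varphi:=\frac1{\alpha^2}\{H_1\bar H_1+H_2\bar H_2-H_3\bar H_3\}$.
   Context: $U\subset\mathbb{R}^3$ open connected, coordinates $(x_1,x_2,x_3)$, $\partial_i=\partial_{x_i}$. A triply orthogonal system is $f:U\to\mathbb{R}^3$ with $\det(\partial_1f,\partial_2f,\partial_3f)\ne0$ and $(\partial_if,\partial_jf)=0$ for $i\ne j$. For $(i,j,k)$ cyclic, $N_i=\partial_jf\times\partial_kf/|\partial_jf\times\partial_kf|$, Lamé coefficients $H_i$ by $\partial_if=H_iN_i$, rotational coefficients $\beta_{ij}=\frac1{H_i}\partial_iH_j$. A Combescure transform of $f$ is a triply orthogonal system $\bar f$ with the same rotational coefficients, $\partial_i\bar f=\bar H_iN_i$ (Lamé coefficients $\bar H_i$ taken with respect to the same $N_i$). A $\chi$-system is one with $H_1^2+H_2^2-H_3^2=\chi$; a Guichard net is a $0$-system; an $\alpha^2|\bar f|^2$-system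 is one with $\bar H_1^2+\bar H_2^2-\bar H_3^2=\alpha^2|\bar f|^2$. Induced Ribaucour transforms: given a Combescure transform $\bar f$ of $f$, put $\gamma_i:=\bar f\cdot N_i$ (so $|\bar f|^2=\gamma_1^2+\gamma_2^2+\gamma_3^2$). For every solution $\varphi$ of $\partial_i\varphi=H_i\gamma_i$ ($i=1,2,3$; such solutions exist and are unique up to an additive constant), the map $f'=f-\frac{2\varphi}{|\bar f|^2}\bar f$, with Lamé coefficients $H'_i=H_i-\frac{2\varphi}{|\bar f|^2}\bar H_i$, is a Ribaucour transform of $f$ (corresponding coordinate surfaces envelop a common sphere congruence with corresponding curvature lines); these form the 1-parameter family of Ribaucour transforms induced by $\bar f$. Such $f'$ is a Guichard net if $H_1'^2+H_2'^2-H_3'^2=0$. *)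

theory Defs
  imports "HOL-Analysis.Analysis"
begin

text \<open>Coordinates on R^3 are indexed by the numeral type 3 (elements 1, 2, 3 = 0),
  which carries arithmetic mod 3, so (i, i+1, i+2) is the cyclic triple.\<close>

definition pd :: "3 \<Rightarrow> (real^3 \<Rightarrow> 'b::real_normed_vector) \<Rightarrow> real^3 \<Rightarrow> 'b" where
  "pd i g x = frechet_derivative g (at x) (axis i 1)"

fun iter_pd :: "3 list \<Rightarrow> (real^3 \<Rightarrow> 'b::real_normed_vector) \<Rightarrow> real^3 \<Rightarrow> 'b" where
  "iter_pd [] g = g"
| "iter_pd (i # is) g = pd i (iter_pd is g)"

definition smooth_on :: "(real^3) set \<Rightarrow> (real^3 \<Rightarrow> 'b::real_normed_vector) \<Rightarrow> bool" where
  "smooth_on U g \<longleftrightarrow> (\<forall>is. iter_pd is g differentiable_on U)"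

definition triply_orthogonal :: "(real^3) set \<Rightarrow> (real^3 \<Rightarrow> real^3) \<Rightarrow> bool" where
  "triply_orthogonal U f \<longleftrightarrow> smooth_on U f
     \<and> (\<forall>x\<in>U. det (\<chi> i. pd i f x) \<noteq> 0)
     \<and> (\<forall>x\<in>U. \<forall>i j. i \<noteq> j \<longrightarrow> inner (pd i f x) (pd j f x) = 0)"

definition unitN :: "(real^3 \<Rightarrow> real^3) \<Rightarrow> 3 \<Rightarrow> real^3 \<Rightarrow> real^3" where
  "unitN f i x = (1 / norm (cross3 (pd (i+1) f x) (pd (i+2) f x))) *\<^sub>R cross3 (pd (i+1) f x) (pd (i+2) f x)"

text \<open>Lame coefficients H_i of f, determined by d_i f = H_i N_i.\<close>
definition lame :: "(real^3 \<Rightarrow> real^3) \<Rightarrow> 3 \<Rightarrow> real^3 \<Rightarrow> real" where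
  "lame f i x = inner (pd i f x) (unitN f i x)"

definition lame_wrt :: "(real^3 \<Rightarrow> real^3) \<Rightarrow> (real^3 \<Rightarrow> real^3) \<Rightarrow> 3 \<Rightarrow> real^3 \<Rightarrow> real" where
  "lame_wrt f fb i x = inner (pd i fb x) (unitN f i x)"

definition rotcoef :: "(3 \<Rightarrow> real^3 \<Rightarrow> real) \<Rightarrow> 3 \<Rightarrow> 3 \<Rightarrow> real^3 \<Rightarrow> real" where
  "rotcoef H i j x = pd i (H j) x / H i x"

definition guichard_coeffs :: "(3 \<Rightarrow> real^3 \<Rightarrow> real) \<Rightarrow> real^3 \<Rightarrow> bool" where
  "guichard_coeffs H x \<longleftrightarrow> (H 1 x)\<^sup>2 + (H 2 x)\<^sup>2 - (H 3 x)\<^sup>2 = 0"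

definition guichard_net :: "(real^3) set \<Rightarrow> (real^3 \<Rightarrow> real^3) \<Rightarrow> bool" where
  "guichard_net U f \<longleftrightarrow> triply_orthogonal U f \<and> (\<forall>x\<in>U. guichard_coeffs (lame f) x)"

definition combescure :: "(real^3) set \<Rightarrow> (real^3 \<Rightarrow> real^3) \<Rightarrow> (real^3 \<Rightarrow> real^3) \<Rightarrow> bool" where
  "combescure U f fb \<longleftrightarrow> triply_orthogonal U fb
     \<and> (\<forall>x\<in>U. \<forall>i. pd i fb x = lame_wrt f fb i x *\<^sub>R unitN f i x)
     \<and> (\<forall>x\<in>U. \<forall>i j. i \<noteq> j \<longrightarrow> rotcoef (lame_wrt f fb) i j x = rotcoef (lame f) i j x)"

definition alpha_sq_system :: "(real^3) set \<Rightarrow> (real^3 \<Rightarrow> real^3) \<Rightarrow> (real^3 \<Rightarrow> real^3) \<Rightarrow> real \<Rightarrow> bool" where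
  "alpha_sq_system U f fb \<alpha> \<longleftrightarrow> (\<forall>x\<in>U.
     (lame_wrt f fb 1 x)\<^sup>2 + (lame_wrt f fb 2 x)\<^sup>2 - (lame_wrt f fb 3 x)\<^sup>2 = \<alpha>\<^sup>2 * (norm (fb x))\<^sup>2)"

definition gam :: "(real^3 \<Rightarrow> real^3) \<Rightarrow> (real^3 \<Rightarrow> real^3) \<Rightarrow> 3 \<Rightarrow> real^3 \<Rightarrow> real" where
  "gam f fb i x = inner (fb x) (unitN f i x)"

definition rib_param :: "(real^3) set \<Rightarrow> (real^3 \<Rightarrow> real^3) \<Rightarrow> (real^3 \<Rightarrow> real^3) \<Rightarrow> (real^3 \<Rightarrow> real) \<Rightarrow> bool" where
  "rib_param U f fb \<phi> \<longleftrightarrow> (\<forall>x\<in>U. \<phi> differentiable (at x)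
      \<and> (\<forall>i. pd i \<phi> x = lame f i x * gam f fb i x))"

definition rib :: "(real^3 \<Rightarrow> real^3) \<Rightarrow> (real^3 \<Rightarrow> real^3) \<Rightarrow> (real^3 \<Rightarrow> real) \<Rightarrow> real^3 \<Rightarrow> real^3" where
  "rib f fb \<phi> x = f x - (2 * \<phi> x / (norm (fb x))\<^sup>2) *\<^sub>R fb x"

definition ribH :: "(real^3 \<Rightarrow> real^3) \<Rightarrow> (real^3 \<Rightarrow> real^3) \<Rightarrow> (real^3 \<Rightarrow> real) \<Rightarrow> 3 \<Rightarrow> real^3 \<Rightarrow> real" where
  "ribH f fb \<phi> i x = lame f i x - (2 * \<phi> x / (norm (fb x))\<^sup>2) * lame_wrt f fb i x"

end

theory Submission
  imports Defs
begin
lemma three_red: "(4::3) = 1" "(5::3) = 2" by simp_all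
lemma det_cyc:
  fixes v :: "3 \<Rightarrow> real^3"
  shows "det (\<chi> i. v i) = inner (v j) (cross3 (v (j+1)) (v (j+2)))"
  using exhaust_3[of j] by (auto simp: cross3_simps three_red)

lemma cramer3:
  fixes v :: "3 \<Rightarrow> real^3"
  assumes "\<forall>j. inner w (cross3 (v (j+1)) (v (j+2))) = 0"
  shows "det (\<chi> i. v i) *\<^sub>R w = 0"
proof -
  have e: "inner w (cross3 (v 2) (v 3)) = 0" "inner w (cross3 (v 3) (v 1)) = 0" "inner w (cross3 (v 1) (v 2)) = 0"
    using assms[rule_format, of 1] assms[rule_format, of 2] assms[rule_format, of 3] by (simp_all add: three_red)
  have "det (\<chi> i. v i) *\<^sub>R w = inner w (cross3 (v 2) (v 3)) *\<^sub>R v 1 + inner w (cross3 (v 3) (v 1)) *\<^sub>R v 2 + inner w (cross3 (v 1) (v 2)) *\<^sub>R v 3"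
    unfolding vec_eq_iff forall_3 by (simp add: cross3_def inner_vec_def sum_3 det_3 vector_def algebra_simps)
  then show ?thesis using e by simp
qed

lemma bbc: "bounded_bilinear (cross3 :: real^3 \<Rightarrow> _)"
  using bilinear_cross bilinear_conv_bounded_bilinear by blast

lemma diff_cross: "u differentiable (at x) \<Longrightarrow> v differentiable (at x) \<Longrightarrow>
   (\<lambda>y. cross3 (u y) (v y)) differentiable (at x)"
  using bounded_bilinear.FDERIV[OF bbc] unfolding differentiable_def by blast

lemma deriv_zero_open:
  assumes "(g has_derivative D) (at x)" "open U" "x \<in> U" "\<forall>y\<in>U. g y = c"
  shows "D h = 0"
proof -
  have "(g has_derivative (\<lambda>h. 0)) (at x)"
    by (rule has_derivative_transform_within_open[OF has_derivative_const[of c] assms(2,3)]) (use assms in auto)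
  then have "D = (\<lambda>h. 0)" using assms(1) has_derivative_unique by blast
  then show ?thesis by simp
qed

lemma pd_has: "(g has_derivative D) (at x) \<Longrightarrow> pd i g x = D (axis i 1)"
  unfolding pd_def using frechet_derivative_at by metis

lemma smooth_diff:
  assumes "smooth_on U g" "open U" "x \<in> U"
  shows "g differentiable (at x)" "pd i g differentiable (at x)"
proof -
  have "iter_pd [] g differentiable_on U" "iter_pd [i] g differentiable_on U"
    using assms(1) unfolding smooth_on_def by blast+
  then show "g differentiable (at x)" "pd i g differentiable (at x)"
    using assms(2,3) differentiable_on_eq_differentiable_at by auto
qed

lemma unitN_facts:
  assumes "triply_orthogonal U f" "open U" "x \<in> U"
  shows "cross3 (pd (j+1) f x) (pd (j+2) f x) \<noteq> 0"
    and "unitN f j differentiable (at x)"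
    and "lame f j x \<noteq> 0"
    and "lame f j differentiable (at x)"
proof -
  have sm: "smooth_on U f" and dt: "det (\<chi> i. pd i f x) \<noteq> 0"
    using assms unfolding triply_orthogonal_def by auto
  have dc: "det (\<chi> i. pd i f x) = inner (pd j f x) (cross3 (pd (j+1) f x) (pd (j+2) f x))"
    by (rule det_cyc)
  show c0: "cross3 (pd (j+1) f x) (pd (j+2) f x) \<noteq> 0"
    using dt dc by auto
  have dp: "\<And>k. pd k f differentiable (at x)" using smooth_diff[OF sm assms(2,3)] by blast
  have dcr: "(\<lambda>y. cross3 (pd (j+1) f y) (pd (j+2) f y)) differentiable (at x)"
    by (rule diff_cross[OF dp dp])
  have dn: "(\<lambda>y. 1 / norm (cross3 (pd (j+1) f y) (pd (j+2) f y))) differentiable (at x)"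
    using c0 dcr by (auto intro!: derivative_intros differentiable_compose[of norm] differentiable_norm_at)
  show du: "unitN f j differentiable (at x)"
    unfolding unitN_def[abs_def] using dn dcr by (rule differentiable_scaleR)
  show "lame f j x \<noteq> 0"
    unfolding lame_def unitN_def using c0 dt dc by simp
  show "lame f j differentiable (at x)"
    unfolding lame_def[abs_def] using dp du by (rule differentiable_inner)
qed

lemma lamewrt_facts:
  assumes "combescure U f fb" "triply_orthogonal U f" "open U" "x \<in> U"
  shows "lame_wrt f fb j x \<noteq> 0" "lame_wrt f fb j differentiable (at x)"
proof -
  have tb: "triply_orthogonal U fb" and eq: "pd j fb x = lame_wrt f fb j x *\<^sub>R unitN f j x"
    using assms unfolding combescure_def by auto
  have sm: "smooth_on U fb" and dt: "det (\<chi> i. pd i fb x) \<noteq> 0"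
    using tb assms unfolding triply_orthogonal_def by auto
  have dc: "det (\<chi> i. pd i fb x) = inner (pd j fb x) (cross3 (pd (j+1) fb x) (pd (j+2) fb x))"
    by (rule det_cyc)
  show "lame_wrt f fb j x \<noteq> 0"
  proof
    assume "lame_wrt f fb j x = 0"
    then have "pd j fb x = 0" using eq by simp
    then show False using dt dc by simp
  qed
  have dp: "\<And>k. pd k fb differentiable (at x)" using smooth_diff[OF sm assms(3,4)] by blast
  show "lame_wrt f fb j differentiable (at x)"
    unfolding lame_wrt_def[abs_def] using dp unitN_facts(2)[OF assms(2-4)] by (rule differentiable_inner)
qed

lemma alg1:
  fixes a1 a2 a3 b1 b2 b3 da1 da2 da3 db1 db2 db3 c g :: real
  assumes "a1 \<noteq> 0" "b1 \<noteq> 0" "db2 * a1 = da2 * b1" "db3 * a1 = da3 * b1"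
    "a1*da1 + a2*da2 - a3*da3 = 0" "b1*db1 + b2*db2 - b3*db3 = c * b1 * g"
  shows "da1*b1 + a1*db1 + (da2*b2 + a2*db2) - (da3*b3 + a3*db3) = c * a1 * g"
proof -
  have "a1*b1*((da1*b1 + a1*db1 + (da2*b2 + a2*db2) - (da3*b3 + a3*db3)) - c * a1 * g) = 0"
    using assms(3-6) by algebra
  then show ?thesis using assms(1,2) by simp
qed

lemma alg3:
  fixes a1 a2 a3 b1 b2 b3 da1 da2 da3 db1 db2 db3 c g :: real
  assumes "a3 \<noteq> 0" "b3 \<noteq> 0" "db2 * a3 = da2 * b3" "db1 * a3 = da1 * b3"
    "a1*da1 + a2*da2 - a3*da3 = 0" "b1*db1 + b2*db2 - b3*db3 = c * b3 * g"
  shows "da1*b1 + a1*db1 + (da2*b2 + a2*db2) - (da3*b3 + a3*db3) = c * a3 * g"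
proof -
  have "a3*b3*((da1*b1 + a1*db1 + (da2*b2 + a2*db2) - (da3*b3 + a3*db3)) - c * a3 * g) = 0"
    using assms(3-6) by algebra
  then show ?thesis using assms(1,2) by simp
qed

definition phi0 :: "(real^3 \<Rightarrow> real^3) \<Rightarrow> (real^3 \<Rightarrow> real^3) \<Rightarrow> real \<Rightarrow> real^3 \<Rightarrow> real" where
  "phi0 f fb \<alpha> x = (1 / \<alpha>\<^sup>2) * (lame f 1 x * lame_wrt f fb 1 x + lame f 2 x * lame_wrt f fb 2 x
                               - lame f 3 x * lame_wrt f fb 3 x)"

lemma phi_point:
  assumes "open U" "guichard_net U f" "combescure U f fb" "alpha_sq_system U f fb \<alpha>" "\<alpha> \<noteq> 0" "x \<in> U"
  shows "phi0 f fb \<alpha> differentiable (at x)" "pd i (phi0 f fb \<alpha>) x = lame f i x * gam f fb i x"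
proof -
  define H where "H = lame f"
  define B where "B = lame_wrt f fb"
  have tf: "triply_orthogonal U f" using assms(2) unfolding guichard_net_def by auto
  have tb: "triply_orthogonal U fb" using assms(3) unfolding combescure_def by auto
  have Hd: "\<And>j. H j differentiable (at x)" and Hn: "\<And>j. H j x \<noteq> 0"
    unfolding H_def using unitN_facts[OF tf assms(1,6)] by auto
  have Bd: "\<And>j. B j differentiable (at x)" and Bn: "\<And>j. B j x \<noteq> 0"
    unfolding B_def using lamewrt_facts[OF assms(3) tf assms(1,6)] by auto
  define DH where "DH j = frechet_derivative (H j) (at x)" for j
  define DB where "DB j = frechet_derivative (B j) (at x)" for j
  define Df where "Df = frechet_derivative fb (at x)"
  have HD: "\<And>j. (H j has_derivative DH j) (at x)" unfolding DH_def using Hd frechet_derivative_works by blast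
  have BD: "\<And>j. (B j has_derivative DB j) (at x)" unfolding DB_def using Bd frechet_derivative_works by blast
  have fD: "(fb has_derivative Df) (at x)" unfolding Df_def
    using smooth_diff(1)[of U fb] tb assms(1,6) frechet_derivative_works unfolding triply_orthogonal_def by blast
  have pH: "\<And>j. pd i (H j) x = DH j (axis i 1)" unfolding DH_def pd_def by simp
  have pB: "\<And>j. pd i (B j) x = DB j (axis i 1)" unfolding DB_def pd_def by simp
  have pf: "Df (axis i 1) = B i x *\<^sub>R unitN f i x" 
    using assms(3,6) unfolding combescure_def B_def Df_def pd_def by auto
  have R: "\<And>j. j \<noteq> i \<Longrightarrow> pd i (B j) x * H i x = pd i (H j) x * B i x"
  proof -
    fix j assume "j \<noteq> i"
    then have "pd i (B j) x / B i x = pd i (H j) x / H i x"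
      using assms(3,6) unfolding combescure_def rotcoef_def B_def H_def by auto
    then show "pd i (B j) x * H i x = pd i (H j) x * B i x"
      using Hn[of i] Bn[of i] by (simp add: field_simps)
  qed
  have GD: "((\<lambda>y. H 1 y * H 1 y + H 2 y * H 2 y - H 3 y * H 3 y) has_derivative
     (\<lambda>h. H 1 x * DH 1 h + DH 1 h * H 1 x + (H 2 x * DH 2 h + DH 2 h * H 2 x) - (H 3 x * DH 3 h + DH 3 h * H 3 x))) (at x)"
    by (intro has_derivative_add has_derivative_diff has_derivative_mult HD)
  have "H 1 x * DH 1 (axis i 1) + DH 1 (axis i 1) * H 1 x + (H 2 x * DH 2 (axis i 1) + DH 2 (axis i 1) * H 2 x)
      - (H 3 x * DH 3 (axis i 1) + DH 3 (axis i 1) * H 3 x) = 0"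
    apply (rule deriv_zero_open[OF GD assms(1,6), of 0])
    using assms(2) unfolding guichard_net_def guichard_coeffs_def H_def by (simp add: power2_eq_square)
  then have G: "H 1 x * pd i (H 1) x + H 2 x * pd i (H 2) x - H 3 x * pd i (H 3) x = 0"
    unfolding pH by (simp add: algebra_simps)
  have AD: "((\<lambda>y. B 1 y * B 1 y + B 2 y * B 2 y - B 3 y * B 3 y - \<alpha>\<^sup>2 * inner (fb y) (fb y)) has_derivative
     (\<lambda>h. B 1 x * DB 1 h + DB 1 h * B 1 x + (B 2 x * DB 2 h + DB 2 h * B 2 x) - (B 3 x * DB 3 h + DB 3 h * B 3 x)
        - \<alpha>\<^sup>2 * (inner (fb x) (Df h) + inner (Df h) (fb x)))) (at x)"
    by (intro has_derivative_add has_derivative_diff has_derivative_mult_right has_derivative_mult BD has_derivative_inner fD)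
  have "B 1 x * DB 1 (axis i 1) + DB 1 (axis i 1) * B 1 x + (B 2 x * DB 2 (axis i 1) + DB 2 (axis i 1) * B 2 x)
      - (B 3 x * DB 3 (axis i 1) + DB 3 (axis i 1) * B 3 x)
        - \<alpha>\<^sup>2 * (inner (fb x) (Df (axis i 1)) + inner (Df (axis i 1)) (fb x)) = 0"
    apply (rule deriv_zero_open[OF AD assms(1,6), of 0])
    using assms(4) unfolding alpha_sq_system_def B_def by (simp add: power2_norm_eq_inner[symmetric] power2_eq_square)
  then have A: "B 1 x * pd i (B 1) x + B 2 x * pd i (B 2) x - B 3 x * pd i (B 3) x = \<alpha>\<^sup>2 * B i x * gam f fb i x"
    unfolding pB pf gam_def by (simp add: algebra_simps inner_commute)
  have PD: "(phi0 f fb \<alpha> has_derivative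
     (\<lambda>h. (1 / \<alpha>\<^sup>2) * ((H 1 x * DB 1 h + DH 1 h * B 1 x) + (H 2 x * DB 2 h + DH 2 h * B 2 x) - (H 3 x * DB 3 h + DH 3 h * B 3 x)))) (at x)"
    unfolding phi0_def[abs_def] H_def[symmetric] B_def[symmetric]
    by (intro has_derivative_add has_derivative_diff has_derivative_mult_right has_derivative_mult BD HD)
  then show "phi0 f fb \<alpha> differentiable (at x)" unfolding differentiable_def by blast
  have "pd i (phi0 f fb \<alpha>) x = (1 / \<alpha>\<^sup>2) * ((pd i (H 1) x * B 1 x + H 1 x * pd i (B 1) x)
     + (pd i (H 2) x * B 2 x + H 2 x * pd i (B 2) x) - (pd i (H 3) x * B 3 x + H 3 x * pd i (B 3) x))"
    using pd_has[OF PD] unfolding pH pB by (simp add: algebra_simps)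
  also have "\<dots> = (1 / \<alpha>\<^sup>2) * (\<alpha>\<^sup>2 * H i x * gam f fb i x)"
  proof -
    have "(pd i (H 1) x * B 1 x + H 1 x * pd i (B 1) x)
     + (pd i (H 2) x * B 2 x + H 2 x * pd i (B 2) x) - (pd i (H 3) x * B 3 x + H 3 x * pd i (B 3) x)
      = \<alpha>\<^sup>2 * H i x * gam f fb i x"
    proof -
      consider "i = 1" | "i = 2" | "i = 3" using exhaust_3 by blast
      then show ?thesis
      proof cases
        case 1
        show ?thesis using R[of 2] R[of 3] G A Hn[of 1] Bn[of 1] unfolding 1
          by (intro alg1) auto
      next
        case 2
        have "(pd i (H 2) x * B 2 x + H 2 x * pd i (B 2) x)
          + (pd i (H 1) x * B 1 x + H 1 x * pd i (B 1) x) - (pd i (H 3) x * B 3 x + H 3 x * pd i (B 3) x)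
          = \<alpha>\<^sup>2 * H i x * gam f fb i x"
          using R[of 1] R[of 3] G A Hn[of 2] Bn[of 2] unfolding 2
          by (intro alg1) (auto simp: algebra_simps)
        then show ?thesis by simp
      next
        case 3
        show ?thesis using R[of 2] R[of 1] G A Hn[of 3] Bn[of 3] unfolding 3
          by (intro alg3) auto
      qed
    qed
    then show ?thesis by simp
  qed
  also have "\<dots> = lame f i x * gam f fb i x" using assms(5) unfolding H_def by simp
  finally show "pd i (phi0 f fb \<alpha>) x = lame f i x * gam f fb i x" .
qed

lemma galg:
  fixes a1 a2 a3 b1 b2 b3 n p \<alpha> :: real
  assumes "n \<noteq> 0" "\<alpha> \<noteq> 0" "a1\<^sup>2 + a2\<^sup>2 - a3\<^sup>2 = 0" "b1\<^sup>2 + b2\<^sup>2 - b3\<^sup>2 = \<alpha>\<^sup>2 * n"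
  shows "(a1 - 2*p/n*b1)\<^sup>2 + (a2 - 2*p/n*b2)\<^sup>2 - (a3 - 2*p/n*b3)\<^sup>2
       = 4*p*(p - (1/\<alpha>\<^sup>2)*(a1*b1 + a2*b2 - a3*b3))*\<alpha>\<^sup>2/n"
proof -
  have "(a1 - 2*p/n*b1)\<^sup>2 + (a2 - 2*p/n*b2)\<^sup>2 - (a3 - 2*p/n*b3)\<^sup>2
      = (a1\<^sup>2 + a2\<^sup>2 - a3\<^sup>2) - 2*(2*p/n)*(a1*b1 + a2*b2 - a3*b3) + (2*p/n)\<^sup>2*(b1\<^sup>2 + b2\<^sup>2 - b3\<^sup>2)"
  proof -
    have "(a1 - t*b1)\<^sup>2 + (a2 - t*b2)\<^sup>2 - (a3 - t*b3)\<^sup>2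
      = (a1\<^sup>2 + a2\<^sup>2 - a3\<^sup>2) - 2*t*(a1*b1 + a2*b2 - a3*b3) + t\<^sup>2*(b1\<^sup>2 + b2\<^sup>2 - b3\<^sup>2)" for t
      by (simp add: power2_eq_square algebra_simps)
    from this[of "2*p/n"] show ?thesis by simp
  qed
  also have "\<dots> = - 2*(2*p/n)*(a1*b1 + a2*b2 - a3*b3) + (2*p/n)\<^sup>2*(\<alpha>\<^sup>2 * n)"
    using assms(3,4) by simp
  also have "\<dots> = 4*p*(p - (1/\<alpha>\<^sup>2)*(a1*b1 + a2*b2 - a3*b3))*\<alpha>\<^sup>2/n"
    using assms(1,2) by (simp add: field_simps power2_eq_square)
  finally show ?thesis .
qed

lemma lin_axes:
  fixes L :: "real^3 \<Rightarrow> real"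
  assumes "linear L" "\<forall>i. L (axis i 1) = 0"
  shows "L = (\<lambda>h. 0)"
  by (rule linear_eq_stdbasis[OF assms(1)]) (use assms(2) in \<open>auto simp: Basis_vec_def linear_zero\<close>)

theorem theorem5p3:
  fixes U :: "(real^3) set" and f fb :: "real^3 \<Rightarrow> real^3" and \<alpha> :: real
  assumes "open U" and "connected U"
    and "guichard_net U f"
    and "combescure U f fb"
    and "alpha_sq_system U f fb \<alpha>"
    and "\<alpha> \<noteq> 0"
    and "\<forall>x\<in>U. fb x \<noteq> 0"
  shows "rib_param U f fb
           (\<lambda>x. (1 / \<alpha>\<^sup>2) * (lame f 1 x * lame_wrt f fb 1 x + lame f 2 x * lame_wrt f fb 2 x
                               - lame f 3 x * lame_wrt f fb 3 x))
       \<and> (\<forall>x\<in>U. guichard_coeffs (ribH f fb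
           (\<lambda>x. (1 / \<alpha>\<^sup>2) * (lame f 1 x * lame_wrt f fb 1 x + lame f 2 x * lame_wrt f fb 2 x
                               - lame f 3 x * lame_wrt f fb 3 x))) x)
       \<and> (\<forall>\<psi>. rib_param U f fb \<psi> \<and> (\<forall>x\<in>U. guichard_coeffs (ribH f fb \<psi>) x)
            \<longrightarrow> (\<forall>x\<in>U. rib f fb \<psi> x = rib f fb
                 (\<lambda>x. (1 / \<alpha>\<^sup>2) * (lame f 1 x * lame_wrt f fb 1 x + lame f 2 x * lame_wrt f fb 2 x
                                     - lame f 3 x * lame_wrt f fb 3 x)) x))"
proof -
  have eqphi: "(\<lambda>x. (1 / \<alpha>\<^sup>2) * (lame f 1 x * lame_wrt f fb 1 x + lame f 2 x * lame_wrt f fb 2 x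
                               - lame f 3 x * lame_wrt f fb 3 x)) = phi0 f fb \<alpha>"
    by (simp add: fun_eq_iff phi0_def)
  define \<phi> where "\<phi> = phi0 f fb \<alpha>"
  have tf: "triply_orthogonal U f" using assms(3) unfolding guichard_net_def by auto
  have P1: "rib_param U f fb \<phi>"
    unfolding rib_param_def \<phi>_def using phi_point[OF assms(1,3,4,5,6)] by blast
  have GC: "guichard_coeffs (ribH f fb p) x \<longleftrightarrow> p x = 0 \<or> p x = \<phi> x" if "x \<in> U" for p x
  proof -
    have n0: "(norm (fb x))\<^sup>2 \<noteq> 0" using assms(7) that by simp
    have g1: "(lame f 1 x)\<^sup>2 + (lame f 2 x)\<^sup>2 - (lame f 3 x)\<^sup>2 = 0"
      using assms(3) that unfolding guichard_net_def guichard_coeffs_def by auto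
    have g2: "(lame_wrt f fb 1 x)\<^sup>2 + (lame_wrt f fb 2 x)\<^sup>2 - (lame_wrt f fb 3 x)\<^sup>2 = \<alpha>\<^sup>2 * (norm (fb x))\<^sup>2"
      using assms(5) that unfolding alpha_sq_system_def by auto
    have "guichard_coeffs (ribH f fb p) x \<longleftrightarrow>
       4*p x*(p x - \<phi> x)*\<alpha>\<^sup>2/(norm (fb x))\<^sup>2 = 0"
      unfolding guichard_coeffs_def ribH_def \<phi>_def phi0_def
      using galg[OF n0 assms(6) g1 g2, of "p x"] by simp
    also have "\<dots> \<longleftrightarrow> p x = 0 \<or> p x = \<phi> x" using n0 assms(6) by simp
    finally show ?thesis .
  qed
  have P2: "\<forall>x\<in>U. guichard_coeffs (ribH f fb \<phi>) x" using GC by simp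
  have P3: "\<forall>x\<in>U. rib f fb \<psi> x = rib f fb \<phi> x"
    if rp: "rib_param U f fb \<psi>" and gp: "\<forall>x\<in>U. guichard_coeffs (ribH f fb \<psi>) x" for \<psi>
  proof -
    have alt: "\<psi> y = 0 \<or> \<psi> y = \<phi> y" if "y \<in> U" for y using GC gp that by blast
    have dpsi: "\<psi> differentiable (at y)" "pd i \<psi> y = lame f i y * gam f fb i y" if "y \<in> U" for y i
      using rp that unfolding rib_param_def by auto
    have dphi: "\<phi> differentiable (at y)" "pd i \<phi> y = lame f i y * gam f fb i y" if "y \<in> U" for y i
      using P1 that unfolding rib_param_def by auto
    have D0: "((\<lambda>y. \<psi> y - \<phi> y) has_derivative (\<lambda>h. 0)) (at y)" if "y \<in> U" for y
    proof -
      define L1 where "L1 = frechet_derivative \<psi> (at y)"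
      define L2 where "L2 = frechet_derivative \<phi> (at y)"
      have d1: "(\<psi> has_derivative L1) (at y)" unfolding L1_def using dpsi(1)[OF that] frechet_derivative_works by blast
      have d2: "(\<phi> has_derivative L2) (at y)" unfolding L2_def using dphi(1)[OF that] frechet_derivative_works by blast
      have dd: "((\<lambda>y. \<psi> y - \<phi> y) has_derivative (\<lambda>h. L1 h - L2 h)) (at y)"
        by (rule has_derivative_diff[OF d1 d2])
      have "(\<lambda>h. L1 h - L2 h) = (\<lambda>h. 0)"
      proof (rule lin_axes)
        show "linear (\<lambda>h. L1 h - L2 h)"
          using has_derivative_linear[OF dd] .
        show "\<forall>i. L1 (axis i 1) - L2 (axis i 1) = 0"
          by (simp add: pd_has[OF d1, symmetric] pd_has[OF d2, symmetric] dpsi(2)[OF that] dphi(2)[OF that])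
      qed
      then show ?thesis using dd by simp
    qed
    have "(\<lambda>y. \<psi> y - \<phi> y) constant_on U"
    proof (rule has_derivative_zero_connected_constant_on[OF assms(2,1), of "{}"])
      show "continuous_on U (\<lambda>y. \<psi> y - \<phi> y)"
        using D0 has_derivative_continuous continuous_at_imp_continuous_on by blast
      show "\<forall>x\<in>U - {}. ((\<lambda>y. \<psi> y - \<phi> y) has_derivative (\<lambda>h. 0)) (at x within U)"
        using D0 has_derivative_at_withinI by blast
    qed simp
    then obtain c where c: "\<forall>y\<in>U. \<psi> y - \<phi> y = c" unfolding constant_on_def by blast
    have "\<psi> x0 = \<phi> x0" if x0: "x0 \<in> U" for x0
    proof (rule ccontr)
      assume ne: "\<psi> x0 \<noteq> \<phi> x0"
      then have "c \<noteq> 0" using c x0 by auto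
      then have z: "\<forall>y\<in>U. \<psi> y = 0" using c alt by force
      define L where "L = frechet_derivative \<psi> (at x0)"
      have d1: "(\<psi> has_derivative L) (at x0)" unfolding L_def using dpsi(1)[OF x0] frechet_derivative_works by blast
      have gz: "gam f fb i x0 = 0" for i
      proof -
        have "L (axis i 1) = 0" by (rule deriv_zero_open[OF d1 assms(1) x0 z])
        then have "lame f i x0 * gam f fb i x0 = 0" using pd_has[OF d1, of i] dpsi(2)[OF x0, of i] by simp
        then show ?thesis using unitN_facts(3)[OF tf assms(1) x0, of i] by simp
      qed
      have "\<forall>j. inner (fb x0) (cross3 (pd (j+1) f x0) (pd (j+2) f x0)) = 0"
      proof
        fix j
        have "inner (fb x0) (unitN f j x0) = 0" using gz[of j] unfolding gam_def .
        then show "inner (fb x0) (cross3 (pd (j+1) f x0) (pd (j+2) f x0)) = 0"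
          using unitN_facts(1)[OF tf assms(1) x0, of j] unfolding unitN_def by simp
      qed
      then have "det (\<chi> i. pd i f x0) *\<^sub>R fb x0 = 0" using cramer3[of "fb x0" "\<lambda>k. pd k f x0"] by simp
      moreover have "det (\<chi> i. pd i f x0) \<noteq> 0" using tf x0 unfolding triply_orthogonal_def by auto
      ultimately have "fb x0 = 0" by simp
      then show False using assms(7) x0 by simp
    qed
    then show ?thesis unfolding rib_def by simp
  qed
  show ?thesis unfolding eqphi \<phi>_def[symmetric] using P1 P2 P3 by blast
qed
end
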